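(* Let $N\in\mathbb N$, $F=\mathbb Z/N\mathbb Z$, and let $\sigma\in G_F$ have at most four blocks, i.e. $|\{f\in F:\sigma_f\neq\sigma_{f+1}\}|\le 4$. Then $D_{\rm stab}(\sigma)=D_{\rm sym}(\sigma)$.
   Context: $G_F=\{-1,1\}^F$, $A_F(\sigma)_f=\sum_{\ell\in F}\sigma_\ell\sigma_{\ell+f}$, $D_{\rm stab}(\sigma)=|\{\tau\in G_F: A_F(\tau)=A_F(\sigma)\}|$. The group $\mathcal S_F=\{-1,1\}\times(F\rtimes\{-1,1\})$ acts on $G_F$ by $\Phi_{(s,t,r)}(\sigma)_f=s\,\sigma_{rf+t}$ ($s,r\in\{-1,1\}$, $t\in F$), and $D_{\rm sym}(\sigma)$ is the cardinality of the orbit of $\sigma$ under this action. *)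

theory Defs
  imports Main "HOL-Library.FuncSet"
begin

text \<open>F = Z/NZ is represented by {0..<N} with arithmetic mod N.
  G_F = functions {0..<N} -> {-1,1} (extensional: undefined outside).\<close>

definition GF :: "nat \<Rightarrow> (nat \<Rightarrow> int) set" where
  "GF N = {0..<N} \<rightarrow>\<^sub>E {-1, 1}"

definition autocorr :: "nat \<Rightarrow> (nat \<Rightarrow> int) \<Rightarrow> (nat \<Rightarrow> int)" where
  "autocorr N \<sigma> = (\<lambda>f\<in>{0..<N}. \<Sum>l<N. \<sigma> l * \<sigma> ((l + f) mod N))"

definition D_stab :: "nat \<Rightarrow> (nat \<Rightarrow> int) \<Rightarrow> nat" where
  "D_stab N \<sigma> = card {\<tau> \<in> GF N. autocorr N \<tau> = autocorr N \<sigma>}"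

definition Phi :: "nat \<Rightarrow> int \<Rightarrow> nat \<Rightarrow> int \<Rightarrow> (nat \<Rightarrow> int) \<Rightarrow> (nat \<Rightarrow> int)" where
  "Phi N s t r \<sigma> = (\<lambda>f\<in>{0..<N}. s * \<sigma> (nat ((r * int f + int t) mod int N)))"

definition sym_orbit :: "nat \<Rightarrow> (nat \<Rightarrow> int) \<Rightarrow> (nat \<Rightarrow> int) set" where
  "sym_orbit N \<sigma> = {Phi N s t r \<sigma> | s t r. s \<in> {-1, 1} \<and> t < N \<and> r \<in> {-1, 1}}"

definition D_sym :: "nat \<Rightarrow> (nat \<Rightarrow> int) \<Rightarrow> nat" where
  "D_sym N \<sigma> = card (sym_orbit N \<sigma>)"

definition num_blocks :: "nat \<Rightarrow> (nat \<Rightarrow> int) \<Rightarrow> nat" where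
  "num_blocks N \<sigma> = card {f \<in> {0..<N}. \<sigma> f \<noteq> \<sigma> ((f + 1) mod N)}"

end

theory Submission
  imports Defs "HOL-Computational_Algebra.Polynomial"
begin


definition si :: "nat \<Rightarrow> (nat \<Rightarrow> int) \<Rightarrow> int \<Rightarrow> int" where
  "si N \<sigma> x = \<sigma> (nat (x mod int N))"

lemma si_mod[simp]: "si N \<sigma> (x mod int N) = si N \<sigma> x"
  by (simp add: si_def)

lemma si_addN[simp]: "si N \<sigma> (x + int N) = si N \<sigma> x"
  by (simp add: si_def)

lemma sum_shift:
  fixes g :: "int \<Rightarrow> 'a::comm_monoid_add"
  assumes N: "0 < N" and per: "\<And>x. g (x mod int N) = g x"
  shows "(\<Sum>l\<in>{0..<int N}. g (l + c)) = (\<Sum>l\<in>{0..<int N}. g l)"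
proof (rule sum.reindex_bij_witness[where i = "\<lambda>m. (m - c) mod int N" and j = "\<lambda>l. (l + c) mod int N"])
  fix a assume "a \<in> {0..<int N}"
  then show "(((a + c) mod int N) - c) mod int N = a"
    by (simp add: mod_diff_left_eq)
next
  fix a assume "a \<in> {0..<int N}"
  then show "(a + c) mod int N \<in> {0..<int N}" using N by simp
next
  fix b assume "b \<in> {0..<int N}"
  then show "(((b - c) mod int N) + c) mod int N = b"
    by (simp add: mod_add_left_eq)
next
  fix b assume "b \<in> {0..<int N}"
  then show "(b - c) mod int N \<in> {0..<int N}" using N by simp
next
  fix a assume "a \<in> {0..<int N}"
  show "g ((a + c) mod int N) = g (a + c)" by (rule per)
qed

lemma sum_neg:
  fixes g :: "int \<Rightarrow> 'a::comm_monoid_add"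
  assumes N: "0 < N" and per: "\<And>x. g (x mod int N) = g x"
  shows "(\<Sum>l\<in>{0..<int N}. g (- l)) = (\<Sum>l\<in>{0..<int N}. g l)"
proof (rule sum.reindex_bij_witness[where i = "\<lambda>m. (- m) mod int N" and j = "\<lambda>l. (- l) mod int N"])
  fix a assume "a \<in> {0..<int N}"
  then show "(- ((- a) mod int N)) mod int N = a"
    by (simp add: mod_minus_eq)
next
  fix a assume "a \<in> {0..<int N}"
  then show "(- a) mod int N \<in> {0..<int N}" using N by simp
next
  fix b assume "b \<in> {0..<int N}"
  then show "(- ((- b) mod int N)) mod int N = b"
    by (simp add: mod_minus_eq)
next
  fix b assume "b \<in> {0..<int N}"
  then show "(- b) mod int N \<in> {0..<int N}" using N by simp
next
  fix a assume "a \<in> {0..<int N}"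
  show "g ((- a) mod int N) = g (- a)" by (rule per)
qed

definition Ai :: "nat \<Rightarrow> (nat \<Rightarrow> int) \<Rightarrow> int \<Rightarrow> int" where
  "Ai N \<sigma> f = (\<Sum>l\<in>{0..<int N}. si N \<sigma> l * si N \<sigma> (l + f))"

lemma Ai_mod: "Ai N \<sigma> (f mod int N) = Ai N \<sigma> f"
  unfolding Ai_def
  by (intro sum.cong refl) (metis si_mod mod_add_right_eq)

lemma sum_nat_int: "(\<Sum>l<N. h l) = (\<Sum>l\<in>{0..<int N}. h (nat l))"
proof -
  have "{0..<int N} = int ` {..<N}" by (simp add: image_int_atLeastLessThan lessThan_atLeast0)
  then show ?thesis by (simp add: sum.reindex)
qed

lemma autocorr_Ai: "f < N \<Longrightarrow> autocorr N \<sigma> f = Ai N \<sigma> (int f)"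
  unfolding autocorr_def Ai_def si_def
  apply (simp add: sum_nat_int)
  apply (intro sum.cong refl)
  apply (simp add: nat_mod_distrib nat_add_distrib)
  done


lemma si_mod_add[simp]: "si N \<sigma> (x mod int N + c) = si N \<sigma> (x + c)"
  by (metis si_mod mod_add_left_eq)

lemma si_add_mod[simp]: "si N \<sigma> (c + x mod int N) = si N \<sigma> (c + x)"
  by (metis si_mod mod_add_right_eq)

lemma si_mod_diff[simp]: "si N \<sigma> (x mod int N - c) = si N \<sigma> (x - c)"
  by (metis si_mod mod_diff_left_eq)

lemma si_Phi: "0 < N \<Longrightarrow> si N (Phi N s t r \<sigma>) x = s * si N \<sigma> (r * x + int t)"
proof -
  assume "0 < N"
  then have False: "N \<noteq> 0" by simp
  then have "nat (x mod int N) \<in> {0..<N}" by (simp add: nat_less_iff)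
  moreover have "(r * (x mod int N) + int t) mod int N = (r * x + int t) mod int N"
    by (metis mod_add_left_eq mod_mult_right_eq)
  ultimately show ?thesis using False by (simp add: si_def Phi_def)
qed

lemma Ai_Phi:
  assumes N: "0 < N" and s: "s \<in> {-1,1}" and r: "r \<in> {-1,1}"
  shows "Ai N (Phi N s t r \<sigma>) f = Ai N \<sigma> f"
proof -
  have ss: "s * s = 1" using s by auto
  have "Ai N (Phi N s t r \<sigma>) f = (\<Sum>l\<in>{0..<int N}. si N \<sigma> (r * l + int t) * si N \<sigma> (r * l + int t + r * f))"
    unfolding Ai_def si_Phi[OF N]
    by (intro sum.cong refl) (simp add: algebra_simps ss flip: mult.assoc)
  also have "\<dots> = Ai N \<sigma> f"
  proof (cases "r = 1")
    case True
    have "(\<Sum>l\<in>{0..<int N}. si N \<sigma> (l + int t) * si N \<sigma> (l + int t + f))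
        = (\<Sum>l\<in>{0..<int N}. si N \<sigma> l * si N \<sigma> (l + f))"
      using sum_shift[OF N, where g = "\<lambda>l. si N \<sigma> l * si N \<sigma> (l + f)" and c = "int t"]
      by (simp add: add.assoc)
    then show ?thesis using True by (simp add: Ai_def)
  next
    case False
    then have r1: "r = -1" using r by auto
    define G where "G = (\<lambda>l. si N \<sigma> (l + int t) * si N \<sigma> (l + int t - f))"
    have per: "\<And>x. G (x mod int N) = G x" unfolding G_def
      by (metis si_mod_add si_mod_diff add_diff_eq)
    have "(\<Sum>l\<in>{0..<int N}. si N \<sigma> (r * l + int t) * si N \<sigma> (r * l + int t + r * f))
        = (\<Sum>l\<in>{0..<int N}. G (- l))"
      unfolding G_def r1 by (intro sum.cong refl) (simp add: algebra_simps)
    also have "\<dots> = (\<Sum>l\<in>{0..<int N}. G l)" by (rule sum_neg[OF N, where g=G, OF per])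
    also have "\<dots> = (\<Sum>l\<in>{0..<int N}. si N \<sigma> (l + int t) * si N \<sigma> (l + int t - f))"
      unfolding G_def ..
    also have "\<dots> = (\<Sum>l\<in>{0..<int N}. si N \<sigma> l * si N \<sigma> (l - f))"
      using sum_shift[OF N, where g = "\<lambda>l. si N \<sigma> l * si N \<sigma> (l - f)" and c = "int t"]
      by (simp add: algebra_simps)
    also have "\<dots> = (\<Sum>l\<in>{0..<int N}. si N \<sigma> (l - f + f) * si N \<sigma> (l - f))"
      by simp
    also have "\<dots> = (\<Sum>l\<in>{0..<int N}. si N \<sigma> (l + f) * si N \<sigma> l)"
      using sum_shift[OF N, where g = "\<lambda>l. si N \<sigma> (l + f) * si N \<sigma> l" and c = "- f"]
      by (simp add: algebra_simps)
    finally show ?thesis by (simp add: Ai_def mult.commute)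
  qed
  finally show ?thesis .
qed

lemma pm_mult: "a \<in> {-1,1::int} \<Longrightarrow> b \<in> {-1,1} \<Longrightarrow> a * b \<in> {-1,1}" by auto

lemma Phi_GF:
  assumes N: "0 < N" and s: "s \<in> {-1,1}" and "\<sigma> \<in> GF N"
  shows "Phi N s t r \<sigma> \<in> GF N"
proof -
  have "\<And>f. f < N \<Longrightarrow> \<sigma> (nat ((r * int f + int t) mod int N)) \<in> {-1,1}"
    using assms(3) N unfolding GF_def by (auto simp: PiE_iff nat_less_iff)
  then show ?thesis using s pm_mult unfolding GF_def Phi_def by (auto simp: PiE_iff)
qed

lemma autocorr_eq_Ai: "autocorr N \<tau> = autocorr N \<sigma> \<longleftrightarrow> (\<forall>f. Ai N \<tau> f = Ai N \<sigma> f)"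
proof
  assume h: "autocorr N \<tau> = autocorr N \<sigma>"
  show "\<forall>f. Ai N \<tau> f = Ai N \<sigma> f"
  proof
    fix f
    show "Ai N \<tau> f = Ai N \<sigma> f"
    proof (cases "N = 0")
      case True then show ?thesis by (simp add: Ai_def)
    next
      case False
      have "nat (f mod int N) < N" using False by (simp add: nat_less_iff)
      then have "Ai N \<tau> (int (nat (f mod int N))) = Ai N \<sigma> (int (nat (f mod int N)))"
        using h autocorr_Ai by metis
      then show ?thesis using False by (simp add: Ai_mod)
    qed
  qed
next
  assume "\<forall>f. Ai N \<tau> f = Ai N \<sigma> f"
  then show "autocorr N \<tau> = autocorr N \<sigma>"
  proof (intro ext)
    fix f
    show "autocorr N \<tau> f = autocorr N \<sigma> f"
    proof (cases "f < N")
      case True then show ?thesis using autocorr_Ai \<open>\<forall>f. Ai N \<tau> f = Ai N \<sigma> f\<close> by metis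
    next
      case False then show ?thesis by (simp add: autocorr_def)
    qed
  qed
qed


lemma Phi_si: "Phi N s t r X = (\<lambda>f\<in>{0..<N}. s * si N X (r * int f + int t))"
  unfolding Phi_def si_def by simp

lemma Phi_comp:
  assumes N: "0 < N"
  shows "Phi N s t r (Phi N s' t' r' \<sigma>) = Phi N (s * s') (nat ((r' * int t + int t') mod int N)) (r' * r) \<sigma>"
proof -
  have eq: "\<And>f. s * (s' * si N \<sigma> (r' * (r * int f + int t) + int t')) =
     s * s' * si N \<sigma> (r' * r * int f + int (nat ((r' * int t + int t') mod int N)))"
  proof -
    fix f
    have "int (nat ((r' * int t + int t') mod int N)) = (r' * int t + int t') mod int N"
      using N by simp
    then have "si N \<sigma> (r' * r * int f + int (nat ((r' * int t + int t') mod int N)))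
       = si N \<sigma> (r' * r * int f + (r' * int t + int t'))" by simp
    then show "s * (s' * si N \<sigma> (r' * (r * int f + int t) + int t')) =
     s * s' * si N \<sigma> (r' * r * int f + int (nat ((r' * int t + int t') mod int N)))"
      by (simp add: algebra_simps)
  qed
  show ?thesis unfolding Phi_si[of N s] si_Phi[OF N] Phi_si[of N "s * s'"]
    by (rule restrict_ext) (rule eq)
qed

lemma Phi_id: "\<sigma> \<in> GF N \<Longrightarrow> Phi N 1 0 1 \<sigma> = \<sigma>"
  unfolding Phi_si si_def GF_def
  by (intro ext) (auto simp: PiE_iff extensional_def)

lemma orbI: "s \<in> {-1,1} \<Longrightarrow> t < N \<Longrightarrow> r \<in> {-1,1} \<Longrightarrow> Phi N s t r \<sigma> \<in> sym_orbit N \<sigma>"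
  unfolding sym_orbit_def by blast

lemma orb_refl: "0 < N \<Longrightarrow> \<sigma> \<in> GF N \<Longrightarrow> \<sigma> \<in> sym_orbit N \<sigma>"
  using orbI[of 1 0 N 1 \<sigma>] Phi_id by simp

lemma orb_trans:
  assumes N: "0 < N" and a: "\<rho> \<in> sym_orbit N \<tau>" and b: "\<tau> \<in> sym_orbit N \<sigma>"
  shows "\<rho> \<in> sym_orbit N \<sigma>"
proof -
  obtain s t r where 1: "\<rho> = Phi N s t r \<tau>" "s \<in> {-1,1}" "t < N" "r \<in> {-1,1}"
    using a unfolding sym_orbit_def by blast
  obtain s' t' r' where 2: "\<tau> = Phi N s' t' r' \<sigma>" "s' \<in> {-1,1}" "t' < N" "r' \<in> {-1,1}"
    using b unfolding sym_orbit_def by blast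
  have "\<rho> = Phi N (s * s') (nat ((r' * int t + int t') mod int N)) (r' * r) \<sigma>"
    using 1 2 Phi_comp[OF N] by simp
  moreover have "nat ((r' * int t + int t') mod int N) < N" using N by (simp add: nat_less_iff)
  moreover have "s * s' \<in> {-1,1}" "r' * r \<in> {-1,1}" using 1 2 by auto
  ultimately show ?thesis by (metis orbI)
qed

lemma orb_GF: "0 < N \<Longrightarrow> \<sigma> \<in> GF N \<Longrightarrow> \<tau> \<in> sym_orbit N \<sigma> \<Longrightarrow> \<tau> \<in> GF N"
  unfolding sym_orbit_def using Phi_GF by blast

lemma orb_sym:
  assumes N: "0 < N" and G: "\<sigma> \<in> GF N" and a: "\<tau> \<in> sym_orbit N \<sigma>"
  shows "\<sigma> \<in> sym_orbit N \<tau>"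
proof -
  obtain s t r where 1: "\<tau> = Phi N s t r \<sigma>" "s \<in> {-1,1}" "t < N" "r \<in> {-1,1}"
    using a unfolding sym_orbit_def by blast
  define t' where "t' = nat ((- r * int t) mod int N)"
  have t'N: "t' < N" using N by (simp add: t'_def nat_less_iff)
  have "Phi N s t' r \<tau> = Phi N (s * s) (nat ((r * int t' + int t) mod int N)) (r * r) \<sigma>"
    using 1 Phi_comp[OF N] by simp
  moreover have "s * s = 1" "r * r = 1" using 1 by auto
  moreover have "(r * int t' + int t) mod int N = 0"
  proof -
    have "int t' = (- r * int t) mod int N" using N by (simp add: t'_def)
    then have "(r * int t' + int t) mod int N = (r * (- r * int t) + int t) mod int N"
      by (metis mod_add_left_eq mod_mult_right_eq)
    also have "r * (- r * int t) + int t = 0" using \<open>r * r = 1\<close> by (simp add: algebra_simps)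
    finally show ?thesis by simp
  qed
  ultimately have "Phi N s t' r \<tau> = \<sigma>" using Phi_id[OF G] by simp
  then show ?thesis using orbI[OF 1(2) t'N 1(4)] by metis
qed


definition bset :: "nat \<Rightarrow> (nat \<Rightarrow> int) \<Rightarrow> nat set" where
  "bset N \<sigma> = {f \<in> {0..<N}. \<sigma> f \<noteq> \<sigma> ((f + 1) mod N)}"

lemma num_blocks_bset: "num_blocks N \<sigma> = card (bset N \<sigma>)"
  by (simp add: num_blocks_def bset_def)

lemma GF_val: "\<sigma> \<in> GF N \<Longrightarrow> f < N \<Longrightarrow> \<sigma> f = -1 \<or> \<sigma> f = 1"
  unfolding GF_def by (auto simp: PiE_iff)

lemma GF_prod: "\<sigma> \<in> GF N \<Longrightarrow> f < N \<Longrightarrow> g < N \<Longrightarrow> \<sigma> f * \<sigma> g = (if \<sigma> f = \<sigma> g then 1 else -1)"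
  using GF_val[of \<sigma> N f] GF_val[of \<sigma> N g] by auto

lemma Ai1:
  assumes N: "0 < N" and G: "\<sigma> \<in> GF N"
  shows "Ai N \<sigma> 1 = int N - 2 * int (num_blocks N \<sigma>)"
proof -
  have "Ai N \<sigma> 1 = (\<Sum>l<N. \<sigma> l * \<sigma> ((l + 1) mod N))"
    unfolding Ai_def sum_nat_int si_def
    by (intro sum.cong refl) (auto simp: nat_mod_distrib nat_add_distrib)
  also have "\<dots> = (\<Sum>l<N. 1 - 2 * of_bool (l \<in> bset N \<sigma>))"
    using N by (intro sum.cong refl) (auto simp: GF_prod[OF G] bset_def)
  also have "\<dots> = int N - 2 * int (card ({..<N} \<inter> {l. l \<in> bset N \<sigma>}))"
    by (simp add: sum_subtractf sum_distrib_left[symmetric])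
  also have "{..<N} \<inter> {l. l \<in> bset N \<sigma>} = bset N \<sigma>" by (auto simp: bset_def)
  finally show ?thesis by (simp add: num_blocks_bset)
qed

lemma bset_even:
  assumes N: "0 < N" and G: "\<sigma> \<in> GF N"
  shows "even (card (bset N \<sigma>))"
proof -
  have sh: "(\<Prod>l<N. \<sigma> ((l + 1) mod N)) = (\<Prod>l<N. \<sigma> l)"
  proof (rule prod.reindex_bij_witness[where i = "\<lambda>m. (m + N - 1) mod N" and j = "\<lambda>l. (l + 1) mod N"])
    fix a assume "a \<in> {..<N}"
    then show "((a + 1) mod N + N - 1) mod N = a"
      by (cases "a + 1 = N") auto
  next
    fix a assume "a \<in> {..<N}" then show "(a + 1) mod N \<in> {..<N}" using N by simp
  next
    fix b assume "b \<in> {..<N}"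
    then show "((b + N - 1) mod N + 1) mod N = b"
      by (cases "b = 0") (auto simp: mod_if)
  next
    fix b assume "b \<in> {..<N}" then show "(b + N - 1) mod N \<in> {..<N}" using N by simp
  qed simp
  have sq: "(\<Prod>l<N. \<sigma> l) * (\<Prod>l<N. \<sigma> l) = 1"
  proof -
    have "(\<Prod>l<N. \<sigma> l) * (\<Prod>l<N. \<sigma> l) = (\<Prod>l<N. \<sigma> l * \<sigma> l)" by (simp add: prod.distrib)
    also have "\<dots> = 1" using GF_val[OF G] by (intro prod.neutral) fastforce
    finally show ?thesis .
  qed
  have "(\<Prod>l<N. \<sigma> l * \<sigma> ((l + 1) mod N)) = 1"
    by (simp only: prod.distrib sh sq)
  moreover have "(\<Prod>l<N. \<sigma> l * \<sigma> ((l + 1) mod N)) = (\<Prod>l<N. (-1::int) ^ of_bool (l \<in> bset N \<sigma>))"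
    using N by (intro prod.cong refl) (auto simp: GF_prod[OF G] bset_def)
  moreover have "(\<Prod>l<N. (-1::int) ^ of_bool (l \<in> bset N \<sigma>)) = (-1) ^ card (bset N \<sigma>)"
  proof -
    have "(\<Prod>l<N. (-1::int) ^ of_bool (l \<in> bset N \<sigma>)) = (-1) ^ (\<Sum>l<N. of_bool (l \<in> bset N \<sigma>))"
      by (rule power_sum[symmetric])
    also have "(\<Sum>l<N. of_bool (l \<in> bset N \<sigma>) :: nat) = card ({..<N} \<inter> {l. l \<in> bset N \<sigma>})" by simp
    also have "{..<N} \<inter> {l. l \<in> bset N \<sigma>} = bset N \<sigma>" by (auto simp: bset_def)
    finally show ?thesis .
  qed
  ultimately have "(-1::int) ^ card (bset N \<sigma>) = 1" by simp
  then show ?thesis by (simp add: minus_one_power_iff split: if_splits)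
qed


lemma si_val: "0 < N \<Longrightarrow> \<sigma> \<in> GF N \<Longrightarrow> si N \<sigma> x = -1 \<or> si N \<sigma> x = 1"
  unfolding si_def by (rule GF_val) (auto simp: nat_less_iff)

lemma si_step: "0 < N \<Longrightarrow> si N \<sigma> (x + 1) \<noteq> si N \<sigma> x \<longleftrightarrow> nat (x mod int N) \<in> bset N \<sigma>"
proof -
  assume N: "0 < N"
  have "nat ((x + 1) mod int N) = (nat (x mod int N) + 1) mod N"
  proof -
    have "(x + 1) mod int N = (x mod int N + 1) mod int N" by (simp add: mod_add_left_eq)
    then show ?thesis using N by (simp add: nat_mod_distrib nat_add_distrib)
  qed
  then show ?thesis using N by (auto simp: si_def bset_def nat_less_iff)
qed

lemma run:
  assumes N: "0 < N" and xy: "x \<le> y"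
    and nb: "\<And>w. x \<le> w \<Longrightarrow> w < y \<Longrightarrow> nat (w mod int N) \<notin> bset N \<sigma>"
  shows "si N \<sigma> y = si N \<sigma> x"
  using xy nb
proof (induction y rule: int_ge_induct)
  case base then show ?case by simp
next
  case (step i)
  then have "si N \<sigma> i = si N \<sigma> x" by simp
  moreover have "nat (i mod int N) \<notin> bset N \<sigma>" using step by simp
  ultimately show ?case using si_step[OF N, of \<sigma> i] by auto
qed

lemma flip: "0 < N \<Longrightarrow> \<sigma> \<in> GF N \<Longrightarrow> nat (x mod int N) \<in> bset N \<sigma> \<Longrightarrow> si N \<sigma> (x + 1) = - si N \<sigma> x"
  using si_step[of N \<sigma> x] si_val[of N \<sigma> x] si_val[of N \<sigma> "x+1"] by auto

lemma seg:
  assumes N: "0 < N" and "si N \<sigma> a = c" and "a \<le> z" "z \<le> y"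
    and nb: "\<And>w. a \<le> w \<Longrightarrow> w < y \<Longrightarrow> nat (w mod int N) \<notin> bset N \<sigma>"
  shows "si N \<sigma> z = c"
  using run[OF N \<open>a \<le> z\<close>, of \<sigma>] nb assms(2,4) by force

lemma sorted4:
  assumes "finite B" "card B = 4"
  obtains b0 b1 b2 b3 :: nat where "b0 < b1" "b1 < b2" "b2 < b3" "B = {b0,b1,b2,b3}"
proof -
  obtain l where l: "sorted_wrt (<) l" "set l = B" "length l = card B"
    using finite_set_strict_sorted[OF assms(1)] by blast
  then obtain a b c d where "l = [a,b,c,d]" using assms(2)
  proof -
    have "l = [l!0, l!1, l!2, l!3]" using assms(2) l(3)
      by (intro nth_equalityI) (auto simp: less_Suc_eq numeral_eq_Suc)
    then show ?thesis using that by blast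
  qed
  then show ?thesis using l that by auto
qed

lemma sorted2:
  assumes "finite B" "card B = 2"
  obtains b0 b1 :: nat where "b0 < b1" "B = {b0,b1}"
proof -
  obtain l where l: "sorted_wrt (<) l" "set l = B" "length l = card B"
    using finite_set_strict_sorted[OF assms(1)] by blast
  then obtain a b where "l = [a,b]" using assms(2)
  proof -
    have "l = [l!0, l!1]" using assms(2) l(3)
      by (intro nth_equalityI) (auto simp: less_Suc_eq numeral_eq_Suc)
    then show ?thesis using that by blast
  qed
  then show ?thesis using l that by auto
qed




definition pat4 :: "nat \<Rightarrow> nat \<Rightarrow> nat \<Rightarrow> nat \<Rightarrow> nat \<Rightarrow> nat \<Rightarrow> int" where
  "pat4 N g0 g1 g2 g3 = (\<lambda>j\<in>{0..<N}. if j < g0 then 1 else if j < g0 + g1 then -1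
      else if j < g0 + g1 + g2 then 1 else -1)"

lemma struct4:
  assumes N: "0 < N" and G: "\<tau> \<in> GF N" and c: "card (bset N \<tau>) = 4"
  shows "\<exists>g0 g1 g2 g3. 0 < g0 \<and> 0 < g1 \<and> 0 < g2 \<and> 0 < g3 \<and> g0 + g1 + g2 + g3 = N
     \<and> pat4 N g0 g1 g2 g3 \<in> sym_orbit N \<tau>"
proof -
  have fin: "finite (bset N \<tau>)" by (simp add: bset_def)
  obtain b0 b1 b2 b3 where b: "b0 < b1" "b1 < b2" "b2 < b3" and B: "bset N \<tau> = {b0,b1,b2,b3}"
    using sorted4[OF fin c] by blast
  have b3N: "b3 < N" using B by (auto simp: bset_def)
  define s where "s = si N \<tau> (int b0 + 1)"
  define t where "t = (b0 + 1) mod N"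
  have sv: "s = -1 \<or> s = 1" using si_val[OF N G] s_def by blast
  have nbB: "\<And>w. nat (w mod int N) \<notin> bset N \<tau> \<longleftrightarrow> (nat (w mod int N) \<noteq> b0 \<and> nat (w mod int N) \<noteq> b1 \<and> nat (w mod int N) \<noteq> b2 \<and> nat (w mod int N) \<noteq> b3)"
    using B by auto
  have inB: "\<And>b. b \<in> bset N \<tau> \<Longrightarrow> nat (int b mod int N) \<in> bset N \<tau>"
    using B b3N by (auto simp: bset_def)
  have modw: "\<And>w. 0 \<le> w \<Longrightarrow> w < int N \<Longrightarrow> w mod int N = w" by simp
  have modw2: "\<And>w. int N \<le> w \<Longrightarrow> w < 2 * int N \<Longrightarrow> w mod int N = w - int N"
  proof -
    fix w :: int assume w: "int N \<le> w" "w < 2 * int N"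
    have "w mod int N = (w - int N) mod int N" by (simp add: minus_mod_self2)
    also have "\<dots> = w - int N" using w by (intro mod_pos_pos_trivial) auto
    finally show "w mod int N = w - int N" .
  qed
  have r0: "\<And>z. int b0 + 1 \<le> z \<Longrightarrow> z \<le> int b1 \<Longrightarrow> si N \<tau> z = s"
    by (rule seg[OF N s_def[symmetric]], assumption, assumption) (use b b3N in \<open>auto simp: B modw split: if_splits\<close>)
  have v1: "si N \<tau> (int b1 + 1) = - s"
    using flip[OF N G inB[of b1]] r0[of "int b1"] b B by auto
  have r1: "\<And>z. int b1 + 1 \<le> z \<Longrightarrow> z \<le> int b2 \<Longrightarrow> si N \<tau> z = - s"
    by (rule seg[OF N v1], assumption, assumption) (use b b3N in \<open>auto simp: B modw split: if_splits\<close>)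
  have v2: "si N \<tau> (int b2 + 1) = s"
    using flip[OF N G inB[of b2]] r1[of "int b2"] b B by auto
  have r2: "\<And>z. int b2 + 1 \<le> z \<Longrightarrow> z \<le> int b3 \<Longrightarrow> si N \<tau> z = s"
    by (rule seg[OF N v2], assumption, assumption) (use b b3N in \<open>auto simp: B modw split: if_splits\<close>)
  have v3: "si N \<tau> (int b3 + 1) = - s"
    using flip[OF N G inB[of b3]] r2[of "int b3"] b B by auto
  have r3: "\<And>z. int b3 + 1 \<le> z \<Longrightarrow> z \<le> int b0 + int N \<Longrightarrow> si N \<tau> z = - s"
  proof (rule seg[OF N v3], assumption, assumption)
    fix w assume w: "int b3 + 1 \<le> w" "w < int b0 + int N"
    show "nat (w mod int N) \<notin> bset N \<tau>"
    proof (cases "w < int N")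
      case True then show ?thesis using w b b3N by (auto simp: B modw split: if_splits)
    next
      case False then show ?thesis using w b b3N by (auto simp: B modw2 split: if_splits)
    qed
  qed
  define g0 where "g0 = b1 - b0"
  define g1 where "g1 = b2 - b1"
  define g2 where "g2 = b3 - b2"
  define g3 where "g3 = N + b0 - b3"
  have "pat4 N g0 g1 g2 g3 = Phi N s t 1 \<tau>"
    unfolding Phi_si pat4_def
  proof (rule restrict_ext)
    fix j assume j: "j \<in> {0..<N}"
    have e: "si N \<tau> (1 * int j + int t) = si N \<tau> (int j + int b0 + 1)"
    proof -
      have "int t = (int b0 + 1) mod int N" by (simp add: t_def zmod_int add.commute)
      then show ?thesis by (simp add: add.assoc)
    qed
    have ss: "s * s = 1" using sv by auto
    show "(if j < g0 then 1 else if j < g0 + g1 then -1 else if j < g0 + g1 + g2 then 1 else -1)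
       = s * si N \<tau> (1 * int j + int t)"
      unfolding e using j b b3N r0[of "int j + int b0 + 1"] r1[of "int j + int b0 + 1"]
        r2[of "int j + int b0 + 1"] r3[of "int j + int b0 + 1"] ss
      by (auto simp: g0_def g1_def g2_def g3_def)
  qed
  moreover have "Phi N s t 1 \<tau> \<in> sym_orbit N \<tau>" using sv N by (intro orbI) (auto simp: t_def)
  moreover have "0 < g0 \<and> 0 < g1 \<and> 0 < g2 \<and> 0 < g3 \<and> g0 + g1 + g2 + g3 = N"
    using b b3N by (auto simp: g0_def g1_def g2_def g3_def)
  ultimately show ?thesis by metis
qed


definition pat2 :: "nat \<Rightarrow> nat \<Rightarrow> nat \<Rightarrow> int" where
  "pat2 N a = (\<lambda>j\<in>{0..<N}. if j < a then 1 else -1)"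

definition pat0 :: "nat \<Rightarrow> nat \<Rightarrow> int" where
  "pat0 N = (\<lambda>j\<in>{0..<N}. 1)"

lemma modw2: "int N \<le> w \<Longrightarrow> w < 2 * int N \<Longrightarrow> w mod int N = w - int N"
proof -
  assume w: "int N \<le> w" "w < 2 * int N"
  have "w mod int N = (w - int N) mod int N" by (simp add: minus_mod_self2)
  also have "\<dots> = w - int N" using w by (intro mod_pos_pos_trivial) auto
  finally show "w mod int N = w - int N" .
qed

lemma struct2:
  assumes N: "0 < N" and G: "\<tau> \<in> GF N" and c: "card (bset N \<tau>) = 2"
  shows "\<exists>a. 0 < a \<and> a < N \<and> pat2 N a \<in> sym_orbit N \<tau>"
proof -
  have fin: "finite (bset N \<tau>)" by (simp add: bset_def)
  obtain b0 b1 where b: "b0 < b1" and B: "bset N \<tau> = {b0,b1}"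
    using sorted2[OF fin c] by blast
  have b3N: "b1 < N" using B by (auto simp: bset_def)
  define s where "s = si N \<tau> (int b0 + 1)"
  define t where "t = (b0 + 1) mod N"
  have sv: "s = -1 \<or> s = 1" using si_val[OF N G] s_def by blast
  have inB: "\<And>b. b \<in> bset N \<tau> \<Longrightarrow> nat (int b mod int N) \<in> bset N \<tau>"
    using B b3N by (auto simp: bset_def)
  have modw: "\<And>w. 0 \<le> w \<Longrightarrow> w < int N \<Longrightarrow> w mod int N = w" by simp
  have r0: "\<And>z. int b0 + 1 \<le> z \<Longrightarrow> z \<le> int b1 \<Longrightarrow> si N \<tau> z = s"
    by (rule seg[OF N s_def[symmetric]], assumption, assumption) (use b b3N in \<open>auto simp: B modw split: if_splits\<close>)
  have v1: "si N \<tau> (int b1 + 1) = - s"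
    using flip[OF N G inB[of b1]] r0[of "int b1"] b B by auto
  have r3: "\<And>z. int b1 + 1 \<le> z \<Longrightarrow> z \<le> int b0 + int N \<Longrightarrow> si N \<tau> z = - s"
  proof (rule seg[OF N v1], assumption, assumption)
    fix w assume w: "int b1 + 1 \<le> w" "w < int b0 + int N"
    show "nat (w mod int N) \<notin> bset N \<tau>"
    proof (cases "w < int N")
      case True then show ?thesis using w b b3N by (auto simp: B modw split: if_splits)
    next
      case False then show ?thesis using w b b3N by (auto simp: B modw2 split: if_splits)
    qed
  qed
  define g0 where "g0 = b1 - b0"
  have "pat2 N g0 = Phi N s t 1 \<tau>"
    unfolding Phi_si pat2_def
  proof (rule restrict_ext)
    fix j assume j: "j \<in> {0..<N}"
    have e: "si N \<tau> (1 * int j + int t) = si N \<tau> (int j + int b0 + 1)"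
    proof -
      have "int t = (int b0 + 1) mod int N" by (simp add: t_def zmod_int add.commute)
      then show ?thesis by (simp add: add.assoc)
    qed
    have ss: "s * s = 1" using sv by auto
    show "(if j < g0 then 1 else -1) = s * si N \<tau> (1 * int j + int t)"
      unfolding e using j b b3N r0[of "int j + int b0 + 1"] r3[of "int j + int b0 + 1"] ss
      by (auto simp: g0_def)
  qed
  moreover have "Phi N s t 1 \<tau> \<in> sym_orbit N \<tau>" using sv N by (intro orbI) (auto simp: t_def)
  moreover have "0 < g0 \<and> g0 < N" using b b3N by (auto simp: g0_def)
  ultimately show ?thesis by metis
qed

lemma struct0:
  assumes N: "0 < N" and G: "\<tau> \<in> GF N" and c: "card (bset N \<tau>) = 0"
  shows "pat0 N \<in> sym_orbit N \<tau>"
proof -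
  have fin: "finite (bset N \<tau>)" by (simp add: bset_def)
  then have B: "bset N \<tau> = {}" using c by simp
  define s where "s = si N \<tau> 0"
  have sv: "s = -1 \<or> s = 1" using si_val[OF N G] s_def by blast
  have r: "\<And>z. 0 \<le> z \<Longrightarrow> si N \<tau> z = s"
    using seg[OF N s_def[symmetric]] B by blast
  have "pat0 N = Phi N s 0 1 \<tau>"
    unfolding Phi_si pat0_def
    by (rule restrict_ext) (use r sv in auto)
  moreover have "Phi N s 0 1 \<tau> \<in> sym_orbit N \<tau>" using sv N by (intro orbI) auto
  ultimately show ?thesis by metis
qed




lemma si_add_mod_diff[simp]: "si N \<sigma> (c + x mod int N - d) = si N \<sigma> (c + x - d)"
proof -
  have "(c + x mod int N - d) mod int N = (c + x - d) mod int N" by (metis mod_add_right_eq mod_diff_left_eq)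
  then show ?thesis by (metis si_mod)
qed

lemma S_lemma:
  assumes N: "0 < N"
  shows "(\<Sum>f\<in>{0..<int N}. Ai N \<sigma> f) = (\<Sum>l\<in>{0..<int N}. si N \<sigma> l)^2"
proof -
  have "(\<Sum>f\<in>{0..<int N}. Ai N \<sigma> f) = (\<Sum>l\<in>{0..<int N}. si N \<sigma> l * (\<Sum>f\<in>{0..<int N}. si N \<sigma> (f + l)))"
    unfolding Ai_def by (subst sum.swap) (simp add: sum_distrib_left add.commute)
  also have "\<dots> = (\<Sum>l\<in>{0..<int N}. si N \<sigma> l * (\<Sum>f\<in>{0..<int N}. si N \<sigma> f))"
    by (intro sum.cong refl arg_cong2[where f="(*)"] sum_shift[OF N]) simp
  finally show ?thesis by (simp add: power2_eq_square sum_distrib_right)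
qed

lemma sum_si: "(\<Sum>l\<in>{0..<int N}. si N X l) = (\<Sum>j<N. X j)"
  unfolding sum_nat_int si_def by (intro sum.cong refl) auto

definition Cy :: "nat \<Rightarrow> (nat \<Rightarrow> int) \<Rightarrow> int \<Rightarrow> int" where
  "Cy N \<sigma> f = (\<Sum>l\<in>{0..<int N}. (si N \<sigma> l - si N \<sigma> (l + 1)) * (si N \<sigma> (l + f) - si N \<sigma> (l + f + 1)))"

lemma Cy_Ai:
  assumes N: "0 < N"
  shows "Cy N \<sigma> f = 2 * Ai N \<sigma> f - Ai N \<sigma> (f + 1) - Ai N \<sigma> (f - 1)"
proof -
  have a: "(\<Sum>l\<in>{0..<int N}. si N \<sigma> (l + 1) * si N \<sigma> (l + f + 1)) = Ai N \<sigma> f"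
    using sum_shift[OF N, where g = "\<lambda>l. si N \<sigma> l * si N \<sigma> (l + f)" and c = 1]
    unfolding Ai_def by (simp add: algebra_simps)
  have b: "(\<Sum>l\<in>{0..<int N}. si N \<sigma> (l + 1) * si N \<sigma> (l + f)) = Ai N \<sigma> (f - 1)"
    using sum_shift[OF N, where g = "\<lambda>l. si N \<sigma> l * si N \<sigma> (l + (f - 1))" and c = 1]
    unfolding Ai_def by (simp add: algebra_simps)
  have c: "(\<Sum>l\<in>{0..<int N}. si N \<sigma> l * si N \<sigma> (l + f + 1)) = Ai N \<sigma> (f + 1)"
    unfolding Ai_def by (simp add: algebra_simps)
  have "Cy N \<sigma> f = (\<Sum>l\<in>{0..<int N}. si N \<sigma> l * si N \<sigma> (l + f))
     - (\<Sum>l\<in>{0..<int N}. si N \<sigma> l * si N \<sigma> (l + f + 1))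
     - (\<Sum>l\<in>{0..<int N}. si N \<sigma> (l + 1) * si N \<sigma> (l + f))
     + (\<Sum>l\<in>{0..<int N}. si N \<sigma> (l + 1) * si N \<sigma> (l + f + 1))"
    unfolding Cy_def by (simp add: algebra_simps sum_subtractf sum.distrib)
  then show ?thesis using a b c by (simp add: Ai_def)
qed

lemma sum_pat4:
  assumes "g0 + g1 + g2 + g3 = N"
  shows "(\<Sum>j<N. pat4 N g0 g1 g2 g3 j) = int g0 - int g1 + int g2 - int g3"
proof -
  let ?p = "pat4 N g0 g1 g2 g3"
  have "(\<Sum>j<N. ?p j) = (\<Sum>j\<in>{0..<g0}. ?p j) + (\<Sum>j\<in>{g0..<g0+g1}. ?p j) + (\<Sum>j\<in>{g0+g1..<g0+g1+g2}. ?p j) + (\<Sum>j\<in>{g0+g1+g2..<N}. ?p j)"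
    using assms by (simp add: sum.atLeastLessThan_concat lessThan_atLeast0)
  also have "\<dots> = (\<Sum>j\<in>{0..<g0}. 1) + (\<Sum>j\<in>{g0..<g0+g1}. -1) + (\<Sum>j\<in>{g0+g1..<g0+g1+g2}. 1) + (\<Sum>j\<in>{g0+g1+g2..<N}. -1)"
    using assms by (intro arg_cong2[where f="(+)"] sum.cong refl) (auto simp: pat4_def)
  also have "\<dots> = int g0 - int g1 + int g2 - int g3" using assms by simp
  finally show ?thesis .
qed

lemma sum_pat2:
  assumes "a \<le> N"
  shows "(\<Sum>j<N. pat2 N a j) = int a - int (N - a)"
proof -
  let ?p = "pat2 N a"
  have "(\<Sum>j<N. ?p j) = (\<Sum>j\<in>{0..<a}. ?p j) + (\<Sum>j\<in>{a..<N}. ?p j)"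
    using assms by (simp add: sum.atLeastLessThan_concat lessThan_atLeast0)
  also have "\<dots> = (\<Sum>j\<in>{0..<a}. 1) + (\<Sum>j\<in>{a..<N}. -1)"
    using assms by (intro arg_cong2[where f="(+)"] sum.cong refl) (auto simp: pat2_def)
  also have "\<dots> = int a - int (N - a)" using assms by simp
  finally show ?thesis .
qed




lemma si_pat4:
  assumes "0 \<le> x" "x < int N"
  shows "si N (pat4 N g0 g1 g2 g3) x = (if x < int g0 then 1 else if x < int g0 + int g1 then -1
      else if x < int g0 + int g1 + int g2 then 1 else -1)"
proof -
  have "nat x < N" using assms by simp
  then show ?thesis using assms by (auto simp: si_def pat4_def)
qed

lemma y_pat4:
  assumes g: "0 < g0" "0 < g1" "0 < g2" "0 < g3" "g0 + g1 + g2 + g3 = N"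
    and l: "0 \<le> l" "l < int N"
  shows "si N (pat4 N g0 g1 g2 g3) l - si N (pat4 N g0 g1 g2 g3) (l + 1) =
    2 * (of_bool (l = int g0 - 1) - of_bool (l = int g0 + int g1 - 1) + of_bool (l = int g0 + int g1 + int g2 - 1) - of_bool (l = int N - 1))"
proof (cases "l + 1 < int N")
  case True
  show ?thesis using si_pat4[of l N] si_pat4[of "l+1" N] True l g by auto
next
  case False
  then have l1: "l + 1 = int N" using l by simp
  have "si N (pat4 N g0 g1 g2 g3) (l + 1) = 1"
  proof -
    have "si N (pat4 N g0 g1 g2 g3) (l + 1) = si N (pat4 N g0 g1 g2 g3) ((l + 1) mod int N)" by simp
    also have "(l + 1) mod int N = 0" using l1 by simp
    also have "si N (pat4 N g0 g1 g2 g3) 0 = 1" using si_pat4[of 0 N] g by auto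
    finally show ?thesis .
  qed
  then show ?thesis using si_pat4[of l N] l1 l g by auto
qed

lemma modcond:
  assumes "0 \<le> x" "x < 2 * int N" "0 \<le> b" "b < int N"
  shows "(x mod int N = b) \<longleftrightarrow> (x = b \<or> x = b + int N)"
proof (cases "x < int N")
  case True then show ?thesis using assms by auto
next
  case False then show ?thesis using assms modw2[of N x] by auto
qed


definition dd :: "int \<Rightarrow> int \<Rightarrow> int \<Rightarrow> int \<Rightarrow> int \<Rightarrow> int \<Rightarrow> int" where
  "dd n x b0 b1 b2 b3 = of_bool (x mod n = b0) - of_bool (x mod n = b1) + of_bool (x mod n = b2) - of_bool (x mod n = b3)"

definition Phi4 :: "nat \<Rightarrow> nat \<Rightarrow> nat \<Rightarrow> nat \<Rightarrow> int poly" where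
  "Phi4 g0 g1 g2 g3 = monom 1 (g0 + g1) + monom 1 (g1 + g2) + monom 1 (g2 + g3) + monom 1 (g3 + g0) - monom 1 (g0) - monom 1 (g1) - monom 1 (g2) - monom 1 (g3) - monom 1 (g1 + g2 + g3) - monom 1 (g0 + g2 + g3) - monom 1 (g0 + g1 + g3) - monom 1 (g0 + g1 + g2)"

lemma Cy_pat4:
  assumes g: "0 < g0" "0 < g1" "0 < g2" "0 < g3" "g0 + g1 + g2 + g3 = N"
  defines "b0 \<equiv> int g0 - 1" and "b1 \<equiv> int g0 + int g1 - 1" and "b2 \<equiv> int g0 + int g1 + int g2 - 1" and "b3 \<equiv> int N - 1"
  shows "Cy N (pat4 N g0 g1 g2 g3) f = 4 * (dd (int N) (b0 + f) b0 b1 b2 b3 - dd (int N) (b1 + f) b0 b1 b2 b3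
     + dd (int N) (b2 + f) b0 b1 b2 b3 - dd (int N) (b3 + f) b0 b1 b2 b3)"
proof -
  let ?P = "pat4 N g0 g1 g2 g3"
  have N: "0 < N" using g by simp
  have y: "\<And>x. si N ?P x - si N ?P (x + 1) = 2 * dd (int N) x b0 b1 b2 b3"
  proof -
    fix x
    have "si N ?P x - si N ?P (x + 1) = si N ?P (x mod int N) - si N ?P (x mod int N + 1)" by simp
    also have "\<dots> = 2 * dd (int N) (x mod int N) b0 b1 b2 b3"
      unfolding dd_def using y_pat4[OF g, of "x mod int N"] N by (simp add: b0_def b1_def b2_def b3_def)
    also have "dd (int N) (x mod int N) b0 b1 b2 b3 = dd (int N) x b0 b1 b2 b3" by (simp add: dd_def)
    finally show "si N ?P x - si N ?P (x + 1) = 2 * dd (int N) x b0 b1 b2 b3" .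
  qed
  have bs: "b0 \<in> {0..<int N}" "b1 \<in> {0..<int N}" "b2 \<in> {0..<int N}" "b3 \<in> {0..<int N}"
    using g by (auto simp: b0_def b1_def b2_def b3_def)
  have "Cy N ?P f = (\<Sum>l\<in>{0..<int N}. 4 * (dd (int N) l b0 b1 b2 b3 * dd (int N) (l + f) b0 b1 b2 b3))"
    unfolding Cy_def using y[of "_ + f"] by (simp add: y add.assoc)
  also have "\<dots> = 4 * (\<Sum>l\<in>{0..<int N}. (of_bool (l = b0) - of_bool (l = b1) + of_bool (l = b2) - of_bool (l = b3)) * dd (int N) (l + f) b0 b1 b2 b3)"
    by (simp add: sum_distrib_left dd_def)
  also have "\<dots> = 4 * (dd (int N) (b0 + f) b0 b1 b2 b3 - dd (int N) (b1 + f) b0 b1 b2 b3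
     + dd (int N) (b2 + f) b0 b1 b2 b3 - dd (int N) (b3 + f) b0 b1 b2 b3)"
    using bs by (simp add: algebra_simps sum.distrib sum_subtractf)
  finally show ?thesis .
qed

lemma coeff_monom1: "coeff (monom (1::int) m) n = of_bool (m = n)"
  by (simp add: coeff_monom)

lemma coeff_Phi4:
  assumes g: "0 < g0" "0 < g1" "0 < g2" "0 < g3" "g0 + g1 + g2 + g3 = N"
    and n: "0 < n" "n < N"
  shows "Cy N (pat4 N g0 g1 g2 g3) (int n) = 4 * coeff (Phi4 g0 g1 g2 g3) n"
proof -
  have e00: "((int g0 - 1) + int n) mod int N = (int g0 - 1) \<longleftrightarrow> False"
    using modcond[of "(int g0 - 1) + int n" N "(int g0 - 1)"] g n by auto
  have e01: "((int g0 - 1) + int n) mod int N = (int g0 + int g1 - 1) \<longleftrightarrow> g1 = n"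
    using modcond[of "(int g0 - 1) + int n" N "(int g0 + int g1 - 1)"] g n by auto
  have e02: "((int g0 - 1) + int n) mod int N = (int g0 + int g1 + int g2 - 1) \<longleftrightarrow> g1 + g2 = n"
    using modcond[of "(int g0 - 1) + int n" N "(int g0 + int g1 + int g2 - 1)"] g n by auto
  have e03: "((int g0 - 1) + int n) mod int N = (int N - 1) \<longleftrightarrow> g1 + g2 + g3 = n"
    using modcond[of "(int g0 - 1) + int n" N "(int N - 1)"] g n by auto
  have e10: "((int g0 + int g1 - 1) + int n) mod int N = (int g0 - 1) \<longleftrightarrow> g0 + g2 + g3 = n"
    using modcond[of "(int g0 + int g1 - 1) + int n" N "(int g0 - 1)"] g n by auto
  have e11: "((int g0 + int g1 - 1) + int n) mod int N = (int g0 + int g1 - 1) \<longleftrightarrow> False"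
    using modcond[of "(int g0 + int g1 - 1) + int n" N "(int g0 + int g1 - 1)"] g n by auto
  have e12: "((int g0 + int g1 - 1) + int n) mod int N = (int g0 + int g1 + int g2 - 1) \<longleftrightarrow> g2 = n"
    using modcond[of "(int g0 + int g1 - 1) + int n" N "(int g0 + int g1 + int g2 - 1)"] g n by auto
  have e13: "((int g0 + int g1 - 1) + int n) mod int N = (int N - 1) \<longleftrightarrow> g2 + g3 = n"
    using modcond[of "(int g0 + int g1 - 1) + int n" N "(int N - 1)"] g n by auto
  have e20: "((int g0 + int g1 + int g2 - 1) + int n) mod int N = (int g0 - 1) \<longleftrightarrow> g3 + g0 = n"
    using modcond[of "(int g0 + int g1 + int g2 - 1) + int n" N "(int g0 - 1)"] g n by auto
  have e21: "((int g0 + int g1 + int g2 - 1) + int n) mod int N = (int g0 + int g1 - 1) \<longleftrightarrow> g3 + g0 + g1 = n"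
    using modcond[of "(int g0 + int g1 + int g2 - 1) + int n" N "(int g0 + int g1 - 1)"] g n by auto
  have e22: "((int g0 + int g1 + int g2 - 1) + int n) mod int N = (int g0 + int g1 + int g2 - 1) \<longleftrightarrow> False"
    using modcond[of "(int g0 + int g1 + int g2 - 1) + int n" N "(int g0 + int g1 + int g2 - 1)"] g n by auto
  have e23: "((int g0 + int g1 + int g2 - 1) + int n) mod int N = (int N - 1) \<longleftrightarrow> g3 = n"
    using modcond[of "(int g0 + int g1 + int g2 - 1) + int n" N "(int N - 1)"] g n by auto
  have e30: "((int N - 1) + int n) mod int N = (int g0 - 1) \<longleftrightarrow> g0 = n"
    using modcond[of "(int N - 1) + int n" N "(int g0 - 1)"] g n by auto
  have e31: "((int N - 1) + int n) mod int N = (int g0 + int g1 - 1) \<longleftrightarrow> g0 + g1 = n"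
    using modcond[of "(int N - 1) + int n" N "(int g0 + int g1 - 1)"] g n by auto
  have e32: "((int N - 1) + int n) mod int N = (int g0 + int g1 + int g2 - 1) \<longleftrightarrow> g0 + g1 + g2 = n"
    using modcond[of "(int N - 1) + int n" N "(int g0 + int g1 + int g2 - 1)"] g n by auto
  have e33: "((int N - 1) + int n) mod int N = (int N - 1) \<longleftrightarrow> False"
    using modcond[of "(int N - 1) + int n" N "(int N - 1)"] g n by auto
  show ?thesis
    unfolding Cy_pat4[OF g] dd_def Phi4_def
    by (simp only: e00 e01 e02 e03 e10 e11 e12 e13 e20 e21 e22 e23 e30 e31 e32 e33
       coeff_add coeff_diff coeff_monom1 of_bool_eq) (simp add: algebra_simps split del: if_split)
qed




lemma mm: "monom (1::int) (a + b) = monom 1 a * monom 1 b"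
  by (simp add: mult_monom)

lemma ring4: "(x0::'a::comm_ring_1)*x1 + x1*x2 + x2*x3 + x3*x0 - x0 - x1 - x2 - x3 - x1*x2*x3 - x0*x2*x3 - x0*x1*x3 - x0*x1*x2
   + (1 + x0*x2) * (1 + x1*x3) = (1 - x0)*(1-x1)*(1-x2)*(1-x3)"
  by (simp add: algebra_simps)
lemma Phi4_prod:
  "Phi4 g0 g1 g2 g3 + (1 + monom 1 (g0 + g2)) * (1 + monom 1 (g1 + g3)) =
   (1 - monom 1 g0) * (1 - monom 1 g1) * (1 - monom 1 g2) * (1 - monom 1 g3)"
  unfolding Phi4_def mm by (rule ring4)
definition pp :: "nat multiset \<Rightarrow> int poly" where
  "pp M = prod_mset (image_mset (\<lambda>g. 1 - monom 1 g) M)"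

lemma pp_add: "pp (add_mset g M) = (1 - monom 1 g) * pp M"
  by (simp add: pp_def)

lemma pp_coeff0: "(\<forall>g\<in>#M. 0 < g) \<Longrightarrow> coeff (pp M) 0 = 1"
proof (induction M)
  case empty then show ?case by (simp add: pp_def)
next
  case (add g M)
  then show ?case by (simp only: pp_add left_diff_distrib mult_1 coeff_diff coeff_monom_mult) simp
qed

lemma pp_low:
  assumes "0 < m"
  shows "(\<forall>g\<in>#M. m \<le> g) \<Longrightarrow> (\<forall>k. 0 < k \<longrightarrow> k < m \<longrightarrow> coeff (pp M) k = 0) \<and> coeff (pp M) m = - int (count M m)"
proof (induction M)
  case empty then show ?case using assms by (simp add: pp_def)
next
  case (add g M)
  then have IH: "\<forall>k. 0 < k \<longrightarrow> k < m \<longrightarrow> coeff (pp M) k = 0" "coeff (pp M) m = - int (count M m)"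
    and gm: "m \<le> g" by auto
  have c0: "coeff (pp M) 0 = 1" using add.prems assms pp_coeff0[of M] by fastforce
  show ?case
  proof (intro conjI allI impI)
    fix k assume "0 < k" "k < m"
    then show "coeff (pp (add_mset g M)) k = 0" using IH gm
      by (simp only: pp_add left_diff_distrib mult_1 coeff_diff coeff_monom_mult) simp
  next
    show "coeff (pp (add_mset g M)) m = - int (count (add_mset g M) m)"
      using IH gm c0 by (simp only: pp_add left_diff_distrib mult_1 coeff_diff coeff_monom_mult) auto
  qed
qed

lemma pp_ne0: "0 < m \<Longrightarrow> (1 - monom (1::int) m) \<noteq> 0"
proof
  assume "0 < m" "1 - monom (1::int) m = 0"
  then have "coeff (1 - monom (1::int) m) 0 = 0" by simp
  then show False using \<open>0 < m\<close> by (simp add: coeff_monom)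
qed

lemma pp_inj:
  "(\<forall>g\<in>#M. 0 < g) \<Longrightarrow> (\<forall>g\<in>#M'. 0 < g) \<Longrightarrow> pp M = pp M' \<Longrightarrow> M = M'"
proof (induction "size M + size M'" arbitrary: M M' rule: less_induct)
  case less
  show ?case
  proof (cases "M = {#} \<and> M' = {#}")
    case True then show ?thesis by simp
  next
    case False
    define S where "S = set_mset M \<union> set_mset M'"
    have fS: "finite S" "S \<noteq> {}" using False by (auto simp: S_def)
    define m where "m = Min S"
    have mS: "m \<in> S" using fS by (simp add: m_def)
    have mle: "\<forall>g\<in>#M. m \<le> g" "\<forall>g\<in>#M'. m \<le> g" using fS by (auto simp: m_def S_def)
    have m0: "0 < m" using mS less.prems by (auto simp: S_def)
    have "coeff (pp M) m = - int (count M m)" "coeff (pp M') m = - int (count M' m)"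
      using pp_low[OF m0] mle by auto
    then have cnt: "count M m = count M' m" using less.prems(3) by simp
    have "0 < count M m \<or> 0 < count M' m" using mS unfolding S_def by auto
    then have "0 < count M m" "0 < count M' m" using cnt by auto
    then have "m \<in># M" "m \<in># M'" by auto
    then obtain M1 M1' where M1: "M = add_mset m M1" and M1': "M' = add_mset m M1'"
      by (metis multi_member_split)
    have "(1 - monom 1 m) * pp M1 = (1 - monom 1 m) * pp M1'"
      using less.prems(3) by (simp add: M1 M1' pp_add)
    then have "pp M1 = pp M1'" using pp_ne0[OF m0] by simp
    moreover have "size M1 + size M1' < size M + size M'" by (simp add: M1 M1')
    ultimately have "M1 = M1'" using less.hyps less.prems by (auto simp: M1 M1')
    then show ?thesis by (simp add: M1 M1')
  qed
qed

lemma pp4: "pp {#g0, g1, g2, g3#} = (1 - monom 1 g0) * (1 - monom 1 g1) * (1 - monom 1 g2) * (1 - monom 1 g3)"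
  by (simp add: pp_def algebra_simps)

lemma coeff_Phi4_out:
  assumes g: "0 < g0" "0 < g1" "0 < g2" "0 < g3" "g0 + g1 + g2 + g3 = N"
    and n: "n = 0 \<or> N \<le> n"
  shows "coeff (Phi4 g0 g1 g2 g3) n = 0"
proof -
  have "g0 + g1 \<noteq> n" using g n by linarith
  moreover have "g1 + g2 \<noteq> n" using g n by linarith
  moreover have "g2 + g3 \<noteq> n" using g n by linarith
  moreover have "g3 + g0 \<noteq> n" using g n by linarith
  moreover have "g0 \<noteq> n" using g n by linarith
  moreover have "g1 \<noteq> n" using g n by linarith
  moreover have "g2 \<noteq> n" using g n by linarith
  moreover have "g3 \<noteq> n" using g n by linarith
  moreover have "g1 + g2 + g3 \<noteq> n" using g n by linarith
  moreover have "g0 + g2 + g3 \<noteq> n" using g n by linarith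
  moreover have "g0 + g1 + g3 \<noteq> n" using g n by linarith
  moreover have "g0 + g1 + g2 \<noteq> n" using g n by linarith
  ultimately show ?thesis unfolding Phi4_def by (simp only: coeff_add coeff_diff coeff_monom1 of_bool_eq) simp
qed



lemma si_big: "int N \<le> x \<Longrightarrow> x < 2 * int N \<Longrightarrow> si N X x = si N X (x - int N)"
  by (metis si_mod modw2)

lemma rot4:
  assumes g: "0 < g0" "0 < g1" "0 < g2" "0 < g3" "g0 + g1 + g2 + g3 = N"
  shows "pat4 N g1 g2 g3 g0 \<in> sym_orbit N (pat4 N g0 g1 g2 g3)"
proof -
  let ?P = "pat4 N g0 g1 g2 g3"
  have "pat4 N g1 g2 g3 g0 = Phi N (-1) g0 1 ?P"
    unfolding Phi_si
  proof (subst pat4_def, rule restrict_ext)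
    fix j assume j: "j \<in> {0..<N}"
    show "(if j < g1 then 1 else if j < g1 + g2 then -1 else if j < g1 + g2 + g3 then 1 else -1) =
       - 1 * si N ?P (1 * int j + int g0)"
    proof (cases "int j + int g0 < int N")
      case True then show ?thesis using si_pat4[of "int j + int g0" N g0 g1 g2 g3] g j by auto
    next
      case False
      then have "si N ?P (int j + int g0) = si N ?P (int j + int g0 - int N)" using j g by (intro si_big) auto
      then show ?thesis using False si_pat4[of "int j + int g0 - int N" N g0 g1 g2 g3] g j by auto
    qed
  qed
  moreover have "Phi N (-1) g0 1 ?P \<in> sym_orbit N ?P" using g by (intro orbI) auto
  ultimately show ?thesis by simp
qed

lemma rev4:
  assumes g: "0 < g0" "0 < g1" "0 < g2" "0 < g3" "g0 + g1 + g2 + g3 = N"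
  shows "pat4 N g3 g2 g1 g0 \<in> sym_orbit N (pat4 N g0 g1 g2 g3)"
proof -
  let ?P = "pat4 N g0 g1 g2 g3"
  have "pat4 N g3 g2 g1 g0 = Phi N (-1) (N - 1) (-1) ?P"
    unfolding Phi_si
  proof (subst pat4_def, rule restrict_ext)
    fix j assume j: "j \<in> {0..<N}"
    have e: "int (N - 1) = int N - 1" using g by simp
    show "(if j < g3 then 1 else if j < g3 + g2 then -1 else if j < g3 + g2 + g1 then 1 else -1) =
       - 1 * si N ?P (- 1 * int j + int (N - 1))"
      unfolding e using si_pat4[of "- 1 * int j + (int N - 1)" N g0 g1 g2 g3] g j by auto
  qed
  moreover have "Phi N (-1) (N - 1) (-1) ?P \<in> sym_orbit N ?P" using g by (intro orbI) auto
  ultimately show ?thesis by simp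
qed

lemma si_pat2:
  assumes "0 \<le> x" "x < int N"
  shows "si N (pat2 N a) x = (if x < int a then 1 else -1)"
proof -
  have "nat x < N" using assms by simp
  then show ?thesis using assms by (auto simp: si_def pat2_def)
qed

lemma swap2:
  assumes a: "0 < a" "a < N"
  shows "pat2 N (N - a) \<in> sym_orbit N (pat2 N a)"
proof -
  let ?P = "pat2 N a"
  have "pat2 N (N - a) = Phi N (-1) a 1 ?P"
    unfolding Phi_si
  proof (subst pat2_def, rule restrict_ext)
    fix j assume j: "j \<in> {0..<N}"
    show "(if j < N - a then 1 else -1) = - 1 * si N ?P (1 * int j + int a)"
    proof (cases "int j + int a < int N")
      case True then show ?thesis using si_pat2[of "int j + int a" N a] a j by auto
    next
      case False
      then have "si N ?P (int j + int a) = si N ?P (int j + int a - int N)" using j a by (intro si_big) auto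
      then show ?thesis using False si_pat2[of "int j + int a - int N" N a] a j by auto
    qed
  qed
  moreover have "Phi N (-1) a 1 ?P \<in> sym_orbit N ?P" using a by (intro orbI) auto
  ultimately show ?thesis by simp
qed




lemma m3: "{#a,b,c#} = {#x,y,z#} \<Longrightarrow> (x=a \<and> {#b,c#} = {#y,z#}) \<or> (x=b \<and> {#a,c#} = {#y,z#}) \<or> (x=c \<and> {#a,b#} = {#y,z#})"
proof -
  assume h: "{#a,b,c#} = {#x,y,z#}"
  hence "x \<in># {#a,b,c#}" by simp
  hence "x = a \<or> x = b \<or> x = c" by auto
  moreover have "{#a,b,c#} = add_mset b {#a,c#}" "{#a,b,c#} = add_mset c {#a,b#}" by (simp_all add: add_mset_commute)
  ultimately show ?thesis using h by (metis add_mset_remove_trivial)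
qed
lemma m4: "{#a,b,c,d#} = {#x,y,z,w#} \<Longrightarrow> (x=a \<and> {#b,c,d#} = {#y,z,w#}) \<or> (x=b \<and> {#a,c,d#} = {#y,z,w#}) \<or> (x=c \<and> {#a,b,d#} = {#y,z,w#}) \<or> (x=d \<and> {#a,b,c#} = {#y,z,w#})"
proof -
  assume h: "{#a,b,c,d#} = {#x,y,z,w#}"
  hence "x \<in># {#a,b,c,d#}" by simp
  hence "x = a \<or> x = b \<or> x = c \<or> x = d" by auto
  moreover have "{#a,b,c,d#} = add_mset b {#a,c,d#}" "{#a,b,c,d#} = add_mset c {#a,b,d#}" "{#a,b,c,d#} = add_mset d {#a,b,c#}" by (simp_all add: add_mset_commute)
  ultimately show ?thesis using h by (metis add_mset_remove_trivial)
qed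
lemma m2: "{#a,b#} = {#x,y#} \<Longrightarrow> (x=a\<and>y=b) \<or> (x=b\<and>y=a)"
proof -
  assume h: "{#a,b#} = {#x,y#}"
  hence "x \<in># {#a,b#}" by simp
  hence "x = a \<or> x = b" by auto
  thus ?thesis using h by (auto simp: add_mset_commute)
qed
lemma d4:
  fixes g0 g1 g2 g3 h0 h1 h2 h3 :: nat
  assumes M: "{#h0,h1,h2,h3#} = {#g0,g1,g2,g3#}"
  and U: "(g0+g2 = h0+h2 \<and> g1+g3 = h1+h3) \<or> (g0+g2 = h1+h3 \<and> g1+g3 = h0+h2)"
  shows "(g0,g1,g2,g3) \<in> {(h0,h1,h2,h3),(h1,h2,h3,h0),(h2,h3,h0,h1),(h3,h0,h1,h2),
     (h3,h2,h1,h0),(h0,h3,h2,h1),(h1,h0,h3,h2),(h2,h1,h0,h3)}"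
  apply (insert m4[OF M] U)
  by (elim disjE conjE; drule m3; elim disjE conjE; drule m2; elim disjE conjE; simp; linarith)


lemma orb_Ai: "0 < N \<Longrightarrow> \<rho> \<in> sym_orbit N \<tau> \<Longrightarrow> Ai N \<rho> f = Ai N \<tau> f"
  unfolding sym_orbit_def using Ai_Phi by blast

lemma pat_d4:
  assumes N: "0 < N" and h: "0 < h0" "0 < h1" "0 < h2" "0 < h3" "h0 + h1 + h2 + h3 = N"
    and g: "(g0,g1,g2,g3) \<in> {(h0,h1,h2,h3),(h1,h2,h3,h0),(h2,h3,h0,h1),(h3,h0,h1,h2),
     (h3,h2,h1,h0),(h0,h3,h2,h1),(h1,h0,h3,h2),(h2,h1,h0,h3)}"
  shows "pat4 N g0 g1 g2 g3 \<in> sym_orbit N (pat4 N h0 h1 h2 h3)"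
proof -
  have G: "pat4 N h0 h1 h2 h3 \<in> GF N"
    unfolding GF_def pat4_def by (auto simp: PiE_iff)
  have r1: "pat4 N h1 h2 h3 h0 \<in> sym_orbit N (pat4 N h0 h1 h2 h3)" using rot4[OF h] .
  have r2: "pat4 N h2 h3 h0 h1 \<in> sym_orbit N (pat4 N h0 h1 h2 h3)"
    using orb_trans[OF N rot4 r1] h by simp
  have r3: "pat4 N h3 h0 h1 h2 \<in> sym_orbit N (pat4 N h0 h1 h2 h3)"
    using orb_trans[OF N rot4 r2] h by simp
  have f0: "pat4 N h3 h2 h1 h0 \<in> sym_orbit N (pat4 N h0 h1 h2 h3)" using rev4[OF h] .
  have f1: "pat4 N h2 h1 h0 h3 \<in> sym_orbit N (pat4 N h0 h1 h2 h3)"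
    using orb_trans[OF N rot4 f0] h by simp
  have f2: "pat4 N h1 h0 h3 h2 \<in> sym_orbit N (pat4 N h0 h1 h2 h3)"
    using orb_trans[OF N rot4 f1] h by simp
  have f3: "pat4 N h0 h3 h2 h1 \<in> sym_orbit N (pat4 N h0 h1 h2 h3)"
    using orb_trans[OF N rot4 f2] h by simp
  show ?thesis using g orb_refl[OF N G] r1 r2 r3 f0 f1 f2 f3 by auto
qed

lemma main4:
  assumes N: "0 < N" and Gt: "\<tau> \<in> GF N" and Gs: "\<sigma> \<in> GF N"
    and ct: "card (bset N \<tau>) = 4" and cs: "card (bset N \<sigma>) = 4"
    and A: "\<And>f. Ai N \<tau> f = Ai N \<sigma> f"
  shows "\<tau> \<in> sym_orbit N \<sigma>"
proof -
  obtain g0 g1 g2 g3 where g: "0 < g0" "0 < g1" "0 < g2" "0 < g3" "g0 + g1 + g2 + g3 = N"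
    and og: "pat4 N g0 g1 g2 g3 \<in> sym_orbit N \<tau>" using struct4[OF N Gt ct] by blast
  obtain h0 h1 h2 h3 where h: "0 < h0" "0 < h1" "0 < h2" "0 < h3" "h0 + h1 + h2 + h3 = N"
    and oh: "pat4 N h0 h1 h2 h3 \<in> sym_orbit N \<sigma>" using struct4[OF N Gs cs] by blast
  let ?P = "pat4 N g0 g1 g2 g3" and ?Q = "pat4 N h0 h1 h2 h3"
  have AA: "\<And>f. Ai N ?P f = Ai N ?Q f"
    using orb_Ai[OF N og] orb_Ai[OF N oh] A by simp
  have CC: "\<And>f. Cy N ?P f = Cy N ?Q f" using AA Cy_Ai[OF N] by simp
  have PP: "Phi4 g0 g1 g2 g3 = Phi4 h0 h1 h2 h3"
  proof (rule poly_eqI)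
    fix n
    show "coeff (Phi4 g0 g1 g2 g3) n = coeff (Phi4 h0 h1 h2 h3) n"
    proof (cases "0 < n \<and> n < N")
      case True
      then show ?thesis using coeff_Phi4[OF g, of n] coeff_Phi4[OF h, of n] CC[of "int n"] by simp
    next
      case False
      then have "n = 0 \<or> N \<le> n" by auto
      then show ?thesis using coeff_Phi4_out[OF g] coeff_Phi4_out[OF h] by simp
    qed
  qed
  have "(\<Sum>f\<in>{0..<int N}. Ai N ?P f) = (\<Sum>f\<in>{0..<int N}. Ai N ?Q f)" using AA by simp
  then have "(int g0 - int g1 + int g2 - int g3)^2 = (int h0 - int h1 + int h2 - int h3)^2"
    unfolding S_lemma[OF N] sum_si sum_pat4[OF g(5)] sum_pat4[OF h(5)] .
  then have "int g0 - int g1 + int g2 - int g3 = int h0 - int h1 + int h2 - int h3 \<or>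
             int g0 - int g1 + int g2 - int g3 = - (int h0 - int h1 + int h2 - int h3)"
    using power2_eq_iff by blast
  then have U: "(g0+g2 = h0+h2 \<and> g1+g3 = h1+h3) \<or> (g0+g2 = h1+h3 \<and> g1+g3 = h0+h2)"
    using g(5) h(5) by linarith
  have "(1 + monom (1::int) (g0 + g2)) * (1 + monom 1 (g1 + g3)) = (1 + monom 1 (h0 + h2)) * (1 + monom 1 (h1 + h3))"
    using U by (auto simp: mult.commute)
  then have "pp {#g0,g1,g2,g3#} = pp {#h0,h1,h2,h3#}"
    unfolding pp4 using Phi4_prod[of g0 g1 g2 g3] Phi4_prod[of h0 h1 h2 h3] PP by metis
  then have M: "{#h0,h1,h2,h3#} = {#g0,g1,g2,g3#}"
    using pp_inj[of "{#g0,g1,g2,g3#}" "{#h0,h1,h2,h3#}"] g h by auto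
  have "pat4 N g0 g1 g2 g3 \<in> sym_orbit N (pat4 N h0 h1 h2 h3)"
    using pat_d4[OF N h d4[OF M U]] .
  moreover have "\<tau> \<in> sym_orbit N ?P" using orb_sym[OF N Gt og] .
  ultimately show ?thesis using orb_trans[OF N] oh by blast
qed

lemma main2:
  assumes N: "0 < N" and Gt: "\<tau> \<in> GF N" and Gs: "\<sigma> \<in> GF N"
    and ct: "card (bset N \<tau>) = 2" and cs: "card (bset N \<sigma>) = 2"
    and A: "\<And>f. Ai N \<tau> f = Ai N \<sigma> f"
  shows "\<tau> \<in> sym_orbit N \<sigma>"
proof -
  obtain a where a: "0 < a" "a < N" and oa: "pat2 N a \<in> sym_orbit N \<tau>" using struct2[OF N Gt ct] by blast
  obtain c where c: "0 < c" "c < N" and oc: "pat2 N c \<in> sym_orbit N \<sigma>" using struct2[OF N Gs cs] by blast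
  have AA: "\<And>f. Ai N (pat2 N a) f = Ai N (pat2 N c) f"
    using orb_Ai[OF N oa] orb_Ai[OF N oc] A by simp
  have "(\<Sum>f\<in>{0..<int N}. Ai N (pat2 N a) f) = (\<Sum>f\<in>{0..<int N}. Ai N (pat2 N c) f)" using AA by simp
  moreover have "(\<Sum>j<N. pat2 N a j) = int a - int (N - a)" using sum_pat2[of a N] a by simp
  moreover have "(\<Sum>j<N. pat2 N c j) = int c - int (N - c)" using sum_pat2[of c N] c by simp
  ultimately have "(int a - int (N - a))^2 = (int c - int (N - c))^2"
    unfolding S_lemma[OF N] sum_si by simp
  then have "int a - int (N - a) = int c - int (N - c) \<or> int a - int (N - a) = - (int c - int (N - c))"
    using power2_eq_iff by blast
  then have "a = c \<or> a = N - c" using a c by linarith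
  moreover have G2: "pat2 N c \<in> GF N" unfolding GF_def pat2_def by (auto simp: PiE_iff)
  ultimately have "pat2 N a \<in> sym_orbit N (pat2 N c)" using orb_refl[OF N G2] swap2[OF c] by auto
  moreover have "\<tau> \<in> sym_orbit N (pat2 N a)" using orb_sym[OF N Gt oa] .
  ultimately show ?thesis using orb_trans[OF N] oc by blast
qed

lemma main0:
  assumes N: "0 < N" and Gt: "\<tau> \<in> GF N" and Gs: "\<sigma> \<in> GF N"
    and ct: "card (bset N \<tau>) = 0" and cs: "card (bset N \<sigma>) = 0"
  shows "\<tau> \<in> sym_orbit N \<sigma>"
  using orb_trans[OF N orb_sym[OF N Gt struct0[OF N Gt ct]] struct0[OF N Gs cs]] .

theorem mainTheorem11:
  fixes N :: nat and \<sigma> :: "nat \<Rightarrow> int"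
  assumes "0 < N"
    and "\<sigma> \<in> GF N"
    and "num_blocks N \<sigma> \<le> 4"
  shows "D_stab N \<sigma> = D_sym N \<sigma>"
proof -
  note N = assms(1) and Gs = assms(2)
  have "{\<tau> \<in> GF N. autocorr N \<tau> = autocorr N \<sigma>} = sym_orbit N \<sigma>"
  proof
    show "sym_orbit N \<sigma> \<subseteq> {\<tau> \<in> GF N. autocorr N \<tau> = autocorr N \<sigma>}"
    proof
      fix \<tau> assume t: "\<tau> \<in> sym_orbit N \<sigma>"
      then have "\<tau> \<in> GF N" using orb_GF[OF N Gs] by blast
      moreover have "autocorr N \<tau> = autocorr N \<sigma>"
        unfolding autocorr_eq_Ai using orb_Ai[OF N t] by blast
      ultimately show "\<tau> \<in> {\<tau> \<in> GF N. autocorr N \<tau> = autocorr N \<sigma>}" by simp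
    qed
  next
    show "{\<tau> \<in> GF N. autocorr N \<tau> = autocorr N \<sigma>} \<subseteq> sym_orbit N \<sigma>"
    proof
      fix \<tau> assume "\<tau> \<in> {\<tau> \<in> GF N. autocorr N \<tau> = autocorr N \<sigma>}"
      then have Gt: "\<tau> \<in> GF N" and A: "\<And>f. Ai N \<tau> f = Ai N \<sigma> f"
        using autocorr_eq_Ai by auto
      have "num_blocks N \<tau> = num_blocks N \<sigma>" using A[of 1] Ai1[OF N Gt] Ai1[OF N Gs] by simp
      then have ce: "card (bset N \<tau>) = card (bset N \<sigma>)" by (simp add: num_blocks_bset)
      have "card (bset N \<sigma>) \<le> 4" using assms(3) by (simp add: num_blocks_bset)
      moreover have "even (card (bset N \<sigma>))" using bset_even[OF N Gs] .
      moreover have "\<And>k::nat. k \<le> 4 \<Longrightarrow> even k \<Longrightarrow> k = 0 \<or> k = 2 \<or> k = 4"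
      proof -
        fix k :: nat assume "k \<le> 4" "even k"
        then obtain q where "k = 2 * q" "q \<le> 2" by (auto elim!: evenE)
        then show "k = 0 \<or> k = 2 \<or> k = 4" by (auto simp: le_Suc_eq eval_nat_numeral)
      qed
      ultimately have "card (bset N \<sigma>) = 0 \<or> card (bset N \<sigma>) = 2 \<or> card (bset N \<sigma>) = 4"
        by blast
      then show "\<tau> \<in> sym_orbit N \<sigma>"
        using main0[OF N Gt Gs] main2[OF N Gt Gs _ _ A] main4[OF N Gt Gs _ _ A] ce by auto
    qed
  qed
  then show ?thesis unfolding D_stab_def D_sym_def by simp
qed


end
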